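(* Let $S\subseteq\mathbb{N}^d$ be a generalised numerical semigroup. A gap $h\in\mathcal{H}(S)$ is Frobenius allowable if and only if $h$ is a maximal element of $\mathcal{H}(S)$ with respect to the natural partial order on $\mathbb{N}^d$.
   Context: $\mathbb{N}=\{0,1,2,\dots\}$. A generalised numerical semigroup (GNS) is a submonoid $S\subseteq\mathbb{N}^d$ (i.e. $0\in S$ and $S$ is closed under addition) whose complement $\mathcal{H}(S)=\mathbb{N}^d\setminus S$ is finite; elements of $\mathcal{H}(S)$ are called gaps. The natural partial order on $\mathbb{N}^d$ is $x\le y$ iff $x^{(i)}\le y^{(i)}$ for all $i$. A relaxed monomial order is a total order $\prec$ on $\mathbb{N}^d$ such that (i) if $v\prec w$ then $v\prec w+u$ for every $u\in\mathbb{N}^d$, and (ii) $0\prec v$ for every nonzero $v\in\mathbb{N}^d$. For such an order, $F_\prec(S)=\max_\prec \mathcal{H}(S)$. A gap $h$ is Frobenius allowable if $h=F_\prec(S)$ for some relaxed monomial order $\prec$. *)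

theory Defs
  imports "HOL-Analysis.Analysis"
begin

text \<open>Elements of N^d are represented as \<open>nat ^ 'd\<close> (d = CARD('d), arbitrary but fixed).\<close>

definition gaps :: "(nat ^ 'd) set \<Rightarrow> (nat ^ 'd) set" where
  "gaps S = UNIV - S"

definition is_gns :: "(nat ^ 'd) set \<Rightarrow> bool" where
  "is_gns S \<longleftrightarrow> 0 \<in> S \<and> (\<forall>x\<in>S. \<forall>y\<in>S. x + y \<in> S) \<and> finite (gaps S)"

definition nat_le :: "nat ^ 'd \<Rightarrow> nat ^ 'd \<Rightarrow> bool" where
  "nat_le x y \<longleftrightarrow> (\<forall>i. x $ i \<le> y $ i)"

text \<open>A relaxed monomial order, given by its strict part \<open>lt\<close> (a strict total order).\<close>
definition relaxed_monomial_order :: "(nat ^ 'd \<Rightarrow> nat ^ 'd \<Rightarrow> bool) \<Rightarrow> bool" where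
  "relaxed_monomial_order lt \<longleftrightarrow>
     (\<forall>x. \<not> lt x x) \<and>
     (\<forall>x y z. lt x y \<longrightarrow> lt y z \<longrightarrow> lt x z) \<and>
     (\<forall>x y. x \<noteq> y \<longrightarrow> lt x y \<or> lt y x) \<and>
     (\<forall>v w u. lt v w \<longrightarrow> lt v (w + u)) \<and>
     (\<forall>v. v \<noteq> 0 \<longrightarrow> lt 0 v)"

definition frobenius :: "(nat ^ 'd \<Rightarrow> nat ^ 'd \<Rightarrow> bool) \<Rightarrow> (nat ^ 'd) set \<Rightarrow> nat ^ 'd" where
  "frobenius lt S = (THE h. h \<in> gaps S \<and> (\<forall>g\<in>gaps S. g \<noteq> h \<longrightarrow> lt g h))"

definition frobenius_allowable :: "(nat ^ 'd) set \<Rightarrow> nat ^ 'd \<Rightarrow> bool" where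
  "frobenius_allowable S h \<longleftrightarrow>
     (\<exists>lt. relaxed_monomial_order lt \<and> h = frobenius lt S)"

definition nat_maximal_gap :: "(nat ^ 'd) set \<Rightarrow> nat ^ 'd \<Rightarrow> bool" where
  "nat_maximal_gap S h \<longleftrightarrow> h \<in> gaps S \<and> (\<forall>g\<in>gaps S. nat_le h g \<longrightarrow> g = h)"

end

theory Submission
  imports Defs
begin

lemma ex_strict_total:
  "\<exists>L::'a\<Rightarrow>'a\<Rightarrow>bool. (\<forall>x. \<not> L x x) \<and> (\<forall>x y z. L x y \<longrightarrow> L y z \<longrightarrow> L x z) \<and> (\<forall>x y. x \<noteq> y \<longrightarrow> L x y \<or> L y x)"
proof -
  obtain r :: "'a rel" where r: "well_order_on UNIV r" using well_order_on by blast
  hence tr: "trans r" and an: "antisym r" and to: "total_on UNIV r"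
    unfolding well_order_on_def linear_order_on_def partial_order_on_def preorder_on_def by auto
  define L where "L x y \<longleftrightarrow> (x,y) \<in> r \<and> x \<noteq> y" for x y
  have 1: "\<forall>x. \<not> L x x" unfolding L_def by simp
  have 2: "\<forall>x y z. L x y \<longrightarrow> L y z \<longrightarrow> L x z"
  proof (intro allI impI)
    fix x y z assume a: "L x y" "L y z"
    have "(x,z) \<in> r" using a tr unfolding L_def by (meson transD)
    moreover have "x \<noteq> z" using a an unfolding L_def by (metis antisymD)
    ultimately show "L x z" unfolding L_def by simp
  qed
  have 3: "\<forall>x y. x \<noteq> y \<longrightarrow> L x y \<or> L y x"
    using to unfolding total_on_def L_def by blast
  show ?thesis using 1 2 3 by blast
qed

lemma sum_less:
  fixes x y :: "nat ^ 'd"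
  assumes "nat_le x y" "x \<noteq> y"
  shows "(\<Sum>i\<in>UNIV. x $ i) < (\<Sum>i\<in>UNIV. y $ i)"
proof -
  obtain i where "x $ i \<noteq> y $ i" using assms(2) by (auto simp: vec_eq_iff)
  hence "x $ i < y $ i" using assms(1) unfolding nat_le_def by (metis le_neq_implies_less)
  thus ?thesis
    by (intro sum_strict_mono_ex1) (use assms(1) in \<open>auto simp: nat_le_def\<close>)
qed

lemma max_exists:
  assumes "finite A" "A \<noteq> {}"
    and irr: "\<forall>x. \<not> lt x x" and tr: "\<forall>x y z. lt x y \<longrightarrow> lt y z \<longrightarrow> lt x z"
    and tot: "\<forall>x y. x \<noteq> y \<longrightarrow> lt x y \<or> lt y x"
  shows "\<exists>m\<in>A. \<forall>g\<in>A. g \<noteq> m \<longrightarrow> lt g m"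
  using assms(1,2)
proof (induction A rule: finite_ne_induct)
  case (singleton x) then show ?case by auto
next
  case (insert x F)
  then obtain m where m: "m \<in> F" "\<forall>g\<in>F. g \<noteq> m \<longrightarrow> lt g m" by blast
  show ?case
  proof (cases "lt m x")
    case True
    then show ?thesis using m tr by (intro bexI[of _ x]) auto
  next
    case False
    hence "x \<noteq> m \<longrightarrow> lt x m" using tot by blast
    then show ?thesis using m by (intro bexI[of _ m]) auto
  qed
qed

lemma frob_eq:
  assumes irr: "\<forall>x. \<not> lt x x" and tr: "\<forall>x y z. lt x y \<longrightarrow> lt y z \<longrightarrow> lt x z"
    and "m \<in> gaps S" "\<forall>g\<in>gaps S. g \<noteq> m \<longrightarrow> lt g m"
  shows "frobenius lt S = m"
  unfolding frobenius_def
proof (rule the_equality)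
  show "m \<in> gaps S \<and> (\<forall>g\<in>gaps S. g \<noteq> m \<longrightarrow> lt g m)" using assms by blast
  fix h assume "h \<in> gaps S \<and> (\<forall>g\<in>gaps S. g \<noteq> h \<longrightarrow> lt g h)"
  thus "h = m" using assms by metis
qed

theorem theorem2p1:
  fixes S :: "(nat ^ 'd) set" and h :: "nat ^ 'd"
  assumes "is_gns S" and "h \<in> gaps S"
  shows "frobenius_allowable S h \<longleftrightarrow> nat_maximal_gap S h"
proof
  assume "frobenius_allowable S h"
  then obtain lt where lt: "relaxed_monomial_order lt" and h: "h = frobenius lt S"
    unfolding frobenius_allowable_def by blast
  note C = lt[unfolded relaxed_monomial_order_def]
  have irr: "\<forall>x. \<not> lt x x" using C by (rule conjunct1)
  have tr: "\<forall>x y z. lt x y \<longrightarrow> lt y z \<longrightarrow> lt x z" using C[THEN conjunct2] by (rule conjunct1)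
  have tot: "\<forall>x y. x \<noteq> y \<longrightarrow> lt x y \<or> lt y x" using C[THEN conjunct2, THEN conjunct2] by (rule conjunct1)
  have mon: "\<forall>v w u. lt v w \<longrightarrow> lt v (w + u)" using C[THEN conjunct2, THEN conjunct2, THEN conjunct2] by (rule conjunct1)
  have fin: "finite (gaps S)" using assms(1) unfolding is_gns_def by blast
  obtain m where m: "m \<in> gaps S" "\<forall>g\<in>gaps S. g \<noteq> m \<longrightarrow> lt g m"
    using max_exists[OF fin _ irr tr tot] assms(2) by blast
  have hm: "h = m" using frob_eq[OF irr tr m] h by simp
  show "nat_maximal_gap S h" unfolding nat_maximal_gap_def
  proof (intro conjI ballI impI)
    show "h \<in> gaps S" by fact
    fix g assume g: "g \<in> gaps S" "nat_le h g"
    show "g = h"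
    proof (rule ccontr)
      assume ne: "g \<noteq> h"
      define u where "u = g - h"
      have gu: "g = h + u" using g(2) unfolding u_def nat_le_def by (auto simp: vec_eq_iff)
      have "lt g h" using m g ne hm by blast
      hence "lt g (h + u)" by (rule mon[rule_format])
      hence "lt g g" unfolding gu[symmetric] .
      thus False using irr by blast
    qed
  qed
next
  assume mx: "nat_maximal_gap S h"
  obtain L :: "nat ^ 'd \<Rightarrow> nat ^ 'd \<Rightarrow> bool" where
    LL: "(\<forall>x. \<not> L x x) \<and> (\<forall>x y z. L x y \<longrightarrow> L y z \<longrightarrow> L x z) \<and> (\<forall>x y. x \<noteq> y \<longrightarrow> L x y \<or> L y x)"
    using ex_strict_total by (elim exE) (rule that)
  have Lirr: "\<forall>x. \<not> L x x" using LL by (rule conjunct1)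
  have Ltr: "\<forall>x y z. L x y \<longrightarrow> L y z \<longrightarrow> L x z" using LL[THEN conjunct2] by (rule conjunct1)
  have Ltot: "\<forall>x y. x \<noteq> y \<longrightarrow> L x y \<or> L y x" using LL[THEN conjunct2] by (rule conjunct2)
  define f :: "nat ^ 'd \<Rightarrow> nat" where "f x = (if nat_le h x then 1 else 0)" for x
  define s :: "nat ^ 'd \<Rightarrow> nat" where "s x = (\<Sum>i\<in>UNIV. x $ i)" for x
  define lt where "lt x y \<longleftrightarrow> f x < f y \<or> (f x = f y \<and> (s x < s y \<or> (s x = s y \<and> L x y)))" for x y
  have irr: "\<forall>x. \<not> lt x x" using Lirr unfolding lt_def by auto
  have tr: "\<forall>x y z. lt x y \<longrightarrow> lt y z \<longrightarrow> lt x z"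
  proof (intro allI impI)
    fix x y z assume "lt x y" "lt y z"
    thus "lt x z" using Ltr[rule_format, of x y z] unfolding lt_def by linarith
  qed
  have tot: "\<forall>x y. x \<noteq> y \<longrightarrow> lt x y \<or> lt y x"
  proof (intro allI impI)
    fix x y :: "nat ^ 'd" assume "x \<noteq> y"
    thus "lt x y \<or> lt y x" using Ltot[rule_format, of x y] unfolding lt_def by linarith
  qed
  have ext: "lt x y" if "nat_le x y" "x \<noteq> y" for x y
  proof -
    have "nat_le h x \<Longrightarrow> nat_le h y" using that(1) unfolding nat_le_def using le_trans by blast
    hence "f x \<le> f y" unfolding f_def by simp
    moreover have "s x < s y" unfolding s_def by (rule sum_less[OF that])
    ultimately show ?thesis unfolding lt_def by auto
  qed
  have le_add: "nat_le w (w + u)" for w u :: "nat ^ 'd" unfolding nat_le_def by simp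
  have mon: "\<forall>v w u. lt v w \<longrightarrow> lt v (w + u)"
  proof (intro allI impI)
    fix v w u assume "lt v w"
    show "lt v (w + u)"
    proof (cases "u = 0")
      case True then show ?thesis using \<open>lt v w\<close> by simp
    next
      case False
      hence "w \<noteq> w + u" by simp
      hence "lt w (w + u)" using ext le_add by blast
      thus ?thesis using tr \<open>lt v w\<close> by blast
    qed
  qed
  have zero: "\<forall>v. v \<noteq> 0 \<longrightarrow> lt 0 v"
  proof (intro allI impI)
    fix v :: "nat ^ 'd" assume "v \<noteq> 0"
    moreover have "nat_le 0 v" unfolding nat_le_def by simp
    ultimately show "lt 0 v" using ext by metis
  qed
  have rmo: "relaxed_monomial_order lt"
    unfolding relaxed_monomial_order_def using irr tr tot mon zero by (intro conjI)
  have "\<forall>g\<in>gaps S. g \<noteq> h \<longrightarrow> lt g h"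
  proof (intro ballI impI)
    fix g assume "g \<in> gaps S" "g \<noteq> h"
    hence "\<not> nat_le h g" using mx unfolding nat_maximal_gap_def by metis
    hence "f g = 0" "f h = 1" unfolding f_def nat_le_def by auto
    thus "lt g h" unfolding lt_def by simp
  qed
  hence "frobenius lt S = h" using frob_eq[OF irr tr assms(2)] by blast
  thus "frobenius_allowable S h" unfolding frobenius_allowable_def using rmo by metis
qed

end
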